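(* Let $B\ge1$ and let $X_B$ be a central chi-square random variable with $B$ degrees of freedom. For $\tau>0$ define $$h(\tau^2)=\frac{\tau}{\mathbb E\{(\sqrt{X_B}-\tau)\mathbb I_{X_B\ge\tau^2}\}},\qquad g(\tau^2)=\frac{\tau\,\mathbb E\{(\sqrt{X_B}-\tau)^2\mathbb I_{X_B\ge\tau^2}\}}{\mathbb E\{(\sqrt{X_B}-\tau)\mathbb I_{X_B\ge\tau^2}\}}.$$ Then for every $\tau\in(0,\infty)$, setting $\varepsilon=1/(1+h(\tau^2))$, we have $$M_B(\varepsilon\mid\mathrm{BlockSoft})=\frac{B+\tau^2+g(\tau^2)}{B\,(1+h(\tau^2))},$$ and $\tau$ is the minimax threshold, i.e. it attains the infimum over thresholds in the definition of $M_B(\varepsilon\mid\mathrm{BlockSoft})$.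
   Context: Block soft thresholding on $\mathbb R^B$: $\eta^{soft}(y;\tau)=(1-\tau/\|y\|_2)_+\,y$ for $\tau\ge0$. Let $\mathcal F_{\varepsilon,B}=\{\nu\in\mathcal P(\mathbb R^B):\nu(\{0\})\ge1-\varepsilon\}$. The minimax MSE is $$M_B(\varepsilon\mid\mathrm{BlockSoft})=\frac1B\inf_{\tau\ge0}\sup_{\nu\in\mathcal F_{\varepsilon,B}}\mathbb E_\nu\|\mathbf X-\eta^{soft}(\mathbf X+\mathbf Z;\tau)\|_2^2,$$ with $\mathbf X\sim\nu$ independent of $\mathbf Z\sim\mathsf N(0,I_{B\times B})$. *)

theory Defs
  imports "HOL-Probability.Probability"
begin

definition block_soft :: "real ^ 'n \<Rightarrow> real \<Rightarrow> real ^ 'n" where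
  "block_soft y \<tau> = max 0 (1 - \<tau> / norm y) *\<^sub>R y"

definition std_gauss :: "(real ^ 'n::finite) measure" where
  "std_gauss = density lborel
     (\<lambda>z. ennreal ((2 * pi) powr (- real CARD('n) / 2) * exp (- (norm z)\<^sup>2 / 2)))"

definition sparse_priors :: "real \<Rightarrow> (real ^ 'n::finite) measure set" where
  "sparse_priors \<epsilon> = {\<nu>. prob_space \<nu> \<and> sets \<nu> = sets borel \<and> measure \<nu> {0} \<ge> 1 - \<epsilon>}"

definition soft_risk :: "(real ^ 'n::finite) measure \<Rightarrow> real \<Rightarrow> ennreal" where
  "soft_risk \<nu> \<tau> = (\<integral>\<^sup>+ x. (\<integral>\<^sup>+ z. ennreal ((norm (x - block_soft (x + z) \<tau>))\<^sup>2)
                        \<partial>(std_gauss :: (real ^ 'n) measure)) \<partial>\<nu>)"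

text \<open>Minimax MSE M_B(eps | BlockSoft), B = CARD('n).\<close>
definition minimax_blocksoft :: "'n::finite itself \<Rightarrow> real \<Rightarrow> ennreal" where
  "minimax_blocksoft _ \<epsilon> =
     (INF \<tau>\<in>{0..}. SUP \<nu>\<in>(sparse_priors \<epsilon> :: (real ^ 'n) measure set). soft_risk \<nu> \<tau>)
       / ennreal (real CARD('n))"

definition chi_square_density :: "real \<Rightarrow> real \<Rightarrow> real" where
  "chi_square_density k x =
     (if x > 0 then x powr (k / 2 - 1) * exp (- x / 2) / (2 powr (k / 2) * Gamma (k / 2)) else 0)"

definition chi_square :: "real \<Rightarrow> real measure" where
  "chi_square k = density lborel (\<lambda>x. ennreal (chi_square_density k x))"

definition chi_m1 :: "real \<Rightarrow> real \<Rightarrow> real" where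
  "chi_m1 k \<tau> = (\<integral> x. (if x \<ge> \<tau>\<^sup>2 then sqrt x - \<tau> else 0) \<partial>chi_square k)"

definition chi_m2 :: "real \<Rightarrow> real \<Rightarrow> real" where
  "chi_m2 k \<tau> = (\<integral> x. (if x \<ge> \<tau>\<^sup>2 then (sqrt x - \<tau>)\<^sup>2 else 0) \<partial>chi_square k)"

definition h_fun :: "real \<Rightarrow> real \<Rightarrow> real" where
  "h_fun k \<tau> = \<tau> / chi_m1 k \<tau>"

definition g_fun :: "real \<Rightarrow> real \<Rightarrow> real" where
  "g_fun k \<tau> = \<tau> * chi_m2 k \<tau> / chi_m1 k \<tau>"

end

theory Submission
  imports Defs
begin

lemma ball_sq_eq:
  fixes x :: real assumes "x < 0"
  shows "{z::'a::real_normed_vector. x < - (norm z)\<^sup>2} = ball 0 (sqrt (-x))"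
proof -
  have "x < - (norm z)\<^sup>2 \<longleftrightarrow> norm z < sqrt (-x)" for z :: 'a
    proof -
      have "norm z < sqrt (-x) \<longleftrightarrow> sqrt ((norm z)\<^sup>2) < sqrt (-x)" by simp
      also have "\<dots> \<longleftrightarrow> (norm z)\<^sup>2 < -x" by (rule real_sqrt_less_iff)
      finally show ?thesis by linarith
    qed
  then show ?thesis unfolding ball_def by (simp add: set_eq_iff)
qed

lemma sqrt_pow_powr:
  fixes c :: real assumes "c > 0"
  shows "sqrt c ^ n = c powr (real n / 2)"
proof -
  have "sqrt c ^ n = (c powr (1/2)) ^ n" using assms by (simp add: powr_half_sqrt)
  also have "\<dots> = c powr (1/2 * real n)" using assms
    by (cases "c = 0") (auto simp: powr_realpow[symmetric] powr_powr)
  finally show ?thesis by simp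
qed


lemma nn_powr_Ico:
  fixes a c :: real assumes a: "a > -1" and c: "c > 0"
  shows "(\<integral>\<^sup>+ s. ennreal (indicator {0..<c} s * s powr a) \<partial>lborel) = ennreal (c powr (a+1) / (a+1))"
proof -
  have "(\<integral>\<^sup>+ s. ennreal (indicator {0..<c} s * s powr a) \<partial>lborel)
      = (\<integral>\<^sup>+ s. ennreal (indicator {0..c} s * s powr a) \<partial>lborel)"
    by (intro nn_integral_cong_AE AE_I[where N="{c}"]) (auto simp: indicator_def emeasure_lborel_countable)
  also have "\<dots> = ennreal (c powr (a+1) / (a+1))"
    using nn_integral_has_integral_lebesgue[OF _ has_integral_powr_from_0[OF a, of c]] c by simp
  finally show ?thesis .
qed

definition polar_dens :: "real \<Rightarrow> real \<Rightarrow> real" where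
  "polar_dens B y = indicator {..0} y * (B/2 * unit_ball_vol B) * (-y) powr (B/2 - 1)"

lemma polar_dens_nonneg: "B \<ge> 0 \<Longrightarrow> polar_dens B y \<ge> 0"
  unfolding polar_dens_def by (auto simp: indicator_def)

lemma polar_distr:
  "distr (lborel :: (real^'n::finite) measure) borel (\<lambda>z. - (norm z)\<^sup>2)
     = density lborel (\<lambda>y. ennreal (polar_dens (real CARD('n)) y))"
  (is "?M = ?N")
proof -
  define B where "B = real CARD('n)"
  have B: "B \<ge> 1" unfolding B_def by simp
  have M: "emeasure ?M {x<..} = (if x < 0 then ennreal (unit_ball_vol B * (-x) powr (B/2)) else 0)" for x
  proof -
    have "emeasure ?M {x<..} = emeasure lborel {z::real^'n. x < - (norm z)\<^sup>2}"
      by (subst emeasure_distr) (auto simp: vimage_def)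
    also have "\<dots> = (if x < 0 then ennreal (unit_ball_vol B * (-x) powr (B/2)) else 0)"
    proof (cases "x < 0")
      case True
      then show ?thesis
        by (simp add: ball_sq_eq emeasure_ball sqrt_pow_powr B_def)
    next
      case False
      then have "{z::real^'n. x < - (norm z)\<^sup>2} = {}"
        by (auto simp: not_less) (smt (verit) zero_le_power2)
      then show ?thesis using False by simp
    qed
    finally show ?thesis .
  qed
  have N: "emeasure ?N {x<..} = (if x < 0 then ennreal (unit_ball_vol B * (-x) powr (B/2)) else 0)" for x
  proof -
    have "emeasure ?N {x<..} = (\<integral>\<^sup>+ y. ennreal (polar_dens B y) * indicator {x<..} y \<partial>lborel)"
      by (subst emeasure_density) (auto simp: B_def polar_dens_def)
    also have "\<dots> = (\<integral>\<^sup>+ y. ennreal (polar_dens B y) * indicator {x<..} y \<partial>distr lborel borel uminus)"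
      by (simp add: lborel_distr_uminus)
    also have "\<dots> = (\<integral>\<^sup>+ s. ennreal (polar_dens B (-s)) * indicator {x<..} (-s) \<partial>lborel)"
      by (subst nn_integral_distr) (auto simp: polar_dens_def)
    also have "\<dots> = (if x < 0 then ennreal (unit_ball_vol B * (-x) powr (B/2)) else 0)"
    proof (cases "x < 0")
      case True
      have "(\<integral>\<^sup>+ s. ennreal (polar_dens B (-s)) * indicator {x<..} (-s) \<partial>lborel)
          = (\<integral>\<^sup>+ s. ennreal (B/2 * unit_ball_vol B) * ennreal (indicator {0..<(-x)} s * s powr (B/2-1)) \<partial>lborel)"
        using B by (intro nn_integral_cong) (auto simp: polar_dens_def indicator_def ennreal_mult'[symmetric])
      also have "\<dots> = ennreal (B/2 * unit_ball_vol B) * ennreal ((-x) powr (B/2) / (B/2))"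
        using B True by (subst nn_integral_cmult) (auto simp: nn_powr_Ico)
      also have "\<dots> = ennreal (unit_ball_vol B * (-x) powr (B/2))"
        using B by (subst ennreal_mult'[symmetric]) (auto simp: field_simps)
      finally show ?thesis using True by simp
    next
      case False
      then have "(\<lambda>s. ennreal (polar_dens B (-s)) * indicator {x<..} (-s)) = (\<lambda>_. 0)"
        by (auto simp: polar_dens_def indicator_def fun_eq_iff)
      then show ?thesis using False by simp
    qed
    finally show ?thesis .
  qed
  show ?thesis
    by (rule measure_eqI_lessThan) (auto simp: M N)
qed


lemma chi_const:
  fixes B :: real assumes "B > 0"
  shows "B/2 * unit_ball_vol B * (2 * pi) powr (- B / 2) = 1 / (2 powr (B/2) * Gamma (B/2))"
proof -
  have nz: "B/2 \<notin> \<int>\<^sub>\<le>\<^sub>0" using assms by (auto dest!: nonpos_Ints_nonpos)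
  have G: "Gamma (B/2 + 1) = B/2 * Gamma (B/2)" using Gamma_plus1[OF nz] .
  have Gp: "Gamma (B/2) > 0" using assms by (intro Gamma_real_pos) simp
  have m: "(2 * pi) powr (- B / 2) = 2 powr (- B / 2) * pi powr (- B/2)"
    by (rule powr_mult)
  have a1: "pi powr (B/2) * pi powr (- B/2) = 1"
    by (simp add: powr_add[symmetric])
  have "B/2 * unit_ball_vol B * (2 * pi) powr (- B / 2)
      = B/2 * (pi powr (B / 2) / (B/2 * Gamma (B/2))) * (2 powr (- B / 2) * pi powr (- B/2))"
    unfolding unit_ball_vol_def G m ..
  also have "\<dots> = (pi powr (B/2) * pi powr (- B/2)) * 2 powr (- B / 2) / Gamma (B/2)"
    using assms Gp by (simp add: field_simps)
  also have "\<dots> = 2 powr (- B / 2) / Gamma (B/2)" unfolding a1 by simp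
  also have "\<dots> = 1 / (2 powr (B/2) * Gamma (B/2))"
  proof -
    have e: "- B / 2 = - (B/2)" by simp
    show ?thesis unfolding e powr_minus_divide by simp
  qed
  finally show ?thesis .
qed

lemma chi_dens_meas[measurable]: "chi_square_density k \<in> borel_measurable borel"
  unfolding chi_square_density_def by measurable

lemma chi_dens_nonneg: "k > 0 \<Longrightarrow> chi_square_density k x \<ge> 0"
  unfolding chi_square_density_def by (auto intro!: divide_nonneg_nonneg mult_nonneg_nonneg)

lemma nn_integral_chi:
  assumes [measurable]: "f \<in> borel_measurable borel" and "k > 0"
  shows "(\<integral>\<^sup>+ x. f x \<partial>chi_square k) = (\<integral>\<^sup>+ x. ennreal (chi_square_density k x) * f x \<partial>lborel)"
  unfolding chi_square_def by (intro nn_integral_density) simp_all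

lemma polar_dens_meas[measurable]: "polar_dens B \<in> borel_measurable borel"
  unfolding polar_dens_def by measurable

lemma gauss_chi:
  fixes f :: "real \<Rightarrow> ennreal"
  assumes [measurable]: "f \<in> borel_measurable borel"
  shows "(\<integral>\<^sup>+ z. f ((norm z)\<^sup>2) \<partial>(std_gauss :: (real^'n::finite) measure))
       = (\<integral>\<^sup>+ x. f x \<partial>chi_square (real CARD('n)))"
proof -
  define B where "B = real CARD('n)"
  define K where "K = (2 * pi) powr (- B / 2)"
  have B: "B \<ge> 1" unfolding B_def by simp
  define \<phi> where "\<phi> y = ennreal (K * exp (y/2)) * f (-y)" for y
  have [measurable]: "\<phi> \<in> borel_measurable borel" unfolding \<phi>_def by measurable
  have "(\<integral>\<^sup>+ z. f ((norm z)\<^sup>2) \<partial>(std_gauss :: (real^'n) measure))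
      = (\<integral>\<^sup>+ z. ennreal (K * exp (- (norm (z::real^'n))\<^sup>2 / 2)) * f ((norm z)\<^sup>2) \<partial>lborel)"
    unfolding std_gauss_def K_def B_def by (subst nn_integral_density) (simp_all)
  also have "\<dots> = (\<integral>\<^sup>+ z. \<phi> (- (norm (z::real^'n))\<^sup>2) \<partial>lborel)"
    by (simp add: \<phi>_def)
  also have "\<dots> = (\<integral>\<^sup>+ y. \<phi> y \<partial>distr (lborel :: (real^'n) measure) borel (\<lambda>z. - (norm z)\<^sup>2))"
    by (subst nn_integral_distr) auto
  also have "\<dots> = (\<integral>\<^sup>+ y. ennreal (polar_dens B y) * \<phi> y \<partial>lborel)"
    unfolding polar_distr B_def by (subst nn_integral_density) (simp_all)
  also have "\<dots> = (\<integral>\<^sup>+ y. ennreal (polar_dens B y) * \<phi> y \<partial>distr lborel borel uminus)"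
    by (simp add: lborel_distr_uminus)
  also have "\<dots> = (\<integral>\<^sup>+ s. ennreal (polar_dens B (-s)) * \<phi> (-s) \<partial>lborel)"
    by (subst nn_integral_distr) (simp_all)
  also have "\<dots> = (\<integral>\<^sup>+ s. ennreal (chi_square_density B s) * f s \<partial>lborel)"
  proof (intro nn_integral_cong)
    fix s :: real
    show "ennreal (polar_dens B (-s)) * \<phi> (-s) = ennreal (chi_square_density B s) * f s"
    proof (cases "s > 0")
      case True
      have C: "B/2 * unit_ball_vol B * K = 1 / (2 powr (B/2) * Gamma (B/2))"
        using chi_const[of B] B unfolding K_def by simp
      have "polar_dens B (-s) * (K * exp (-s/2)) = (B/2 * unit_ball_vol B * K) * (s powr (B/2-1) * exp(-s/2))"
        using True by (simp add: polar_dens_def indicator_def mult_ac)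
      also have "\<dots> = chi_square_density B s"
        using True unfolding C by (simp add: chi_square_density_def)
      finally have "polar_dens B (-s) * (K * exp (-s/2)) = chi_square_density B s" .
      then show ?thesis using True B
        by (simp add: \<phi>_def mult.assoc[symmetric] ennreal_mult'[symmetric] polar_dens_nonneg)
    next
      case False
      then have "polar_dens B (-s) = 0"
        by (cases "s = 0") (auto simp: polar_dens_def indicator_def)
      then show ?thesis using False by (simp add: chi_square_density_def)
    qed
  qed
  also have "\<dots> = (\<integral>\<^sup>+ x. f x \<partial>chi_square B)"
    using nn_integral_chi[of f B] B by simp
  finally show ?thesis by (simp only: B_def)
qed


lemma gamma_half:
  fixes a :: real assumes a: "a > 0"
  shows "(\<integral>\<^sup>+ x. ennreal (indicator {0<..} x * x powr (a-1) * exp (- x / 2)) \<partial>lborel)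
       = ennreal (2 powr a * Gamma a)"
proof -
  define g where "g x = ennreal (indicator {0<..} x * x powr (a-1) * exp (- x / 2))" for x :: real
  have [measurable]: "g \<in> borel_measurable borel" unfolding g_def by measurable
  have "(\<integral>\<^sup>+ x. g x \<partial>lborel) = ennreal \<bar>2\<bar> * (\<integral>\<^sup>+ x. g (0 + 2 * x) \<partial>lborel)"
    by (rule nn_integral_real_affine) auto
  also have "(\<integral>\<^sup>+ x. g (0 + 2 * x) \<partial>lborel)
      = (\<integral>\<^sup>+ t. ennreal (2 powr (a-1)) * ennreal (indicator {0..} t * t powr (a - 1) / exp t) \<partial>lborel)"
  proof (intro nn_integral_cong)
    fix t :: real
    show "g (0 + 2 * t) = ennreal (2 powr (a-1)) * ennreal (indicator {0..} t * t powr (a - 1) / exp t)"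
    proof (cases "t > 0")
      case True
      then show ?thesis
        by (simp add: g_def ennreal_mult'[symmetric] powr_mult exp_minus field_simps)
    next
      case False
      then show ?thesis by (cases "t = 0") (auto simp: g_def indicator_def)
    qed
  qed
  also have "\<dots> = ennreal (2 powr (a-1)) * ennreal (Gamma a)"
    by (subst nn_integral_cmult) (auto simp: Gamma_conv_nn_integral_real[OF a])
  also have "ennreal \<bar>2\<bar> * (ennreal (2 powr (a-1)) * ennreal (Gamma a)) = ennreal (2 powr a * Gamma a)"
  proof -
    have e: "2 * (2 powr (a - 1) * Gamma a) = (2::real) powr a * Gamma a"
      by (simp add: powr_diff)
    have "ennreal (2 powr a * Gamma a) = ennreal 2 * ennreal (2 powr (a - 1) * Gamma a)"
      unfolding e[symmetric] using a by (intro ennreal_mult) auto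
    then show ?thesis using a
      by (simp add: ennreal_mult'[symmetric] mult.assoc[symmetric])
  qed
  finally show ?thesis unfolding g_def .
qed

lemma chi_dens_alt:
  "k > 0 \<Longrightarrow> chi_square_density k x
     = indicator {0<..} x * x powr (k/2-1) * exp (- x / 2) / (2 powr (k/2) * Gamma (k/2))"
  unfolding chi_square_density_def by (auto simp: indicator_def)

lemma chi_total:
  fixes k :: real assumes k: "k > 0"
  shows "(\<integral>\<^sup>+ x. 1 \<partial>chi_square k) = 1"
proof -
  have Gp: "Gamma (k/2) > 0" using k by simp
  have "(\<integral>\<^sup>+ x. 1 \<partial>chi_square k) = (\<integral>\<^sup>+ x. ennreal (chi_square_density k x) * 1 \<partial>lborel)"
    by (rule nn_integral_chi) (use k in auto)
  also have "\<dots> = (\<integral>\<^sup>+ x. ennreal (1 / (2 powr (k/2) * Gamma (k/2))) *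
        ennreal (indicator {0<..} x * x powr (k/2-1) * exp (- x / 2)) \<partial>lborel)"
    using k Gp by (intro nn_integral_cong) (simp add: chi_dens_alt ennreal_mult'[symmetric])
  also have "\<dots> = ennreal (1 / (2 powr (k/2) * Gamma (k/2))) * ennreal (2 powr (k/2) * Gamma (k/2))"
    using k gamma_half[of "k/2"] by (subst nn_integral_cmult) auto
  also have "\<dots> = 1" using Gp by (simp add: ennreal_mult'[symmetric])
  finally show ?thesis .
qed

lemma chi_mean:
  fixes k :: real assumes k: "k > 0"
  shows "(\<integral>\<^sup>+ x. ennreal x \<partial>chi_square k) = ennreal k"
proof -
  have Gp: "Gamma (k/2) > 0" using k by simp
  have G: "Gamma (k/2 + 1) = k/2 * Gamma (k/2)"
  proof -
    have nz: "k/2 \<notin> \<int>\<^sub>\<le>\<^sub>0" using k by (auto dest!: nonpos_Ints_nonpos)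
    show ?thesis using Gamma_plus1[OF nz] .
  qed
  have "(\<integral>\<^sup>+ x. ennreal x \<partial>chi_square k) = (\<integral>\<^sup>+ x. ennreal (chi_square_density k x) * ennreal x \<partial>lborel)"
    by (rule nn_integral_chi) (use k in auto)
  also have "\<dots> = (\<integral>\<^sup>+ x. ennreal (1 / (2 powr (k/2) * Gamma (k/2))) *
        ennreal (indicator {0<..} x * x powr ((k/2+1)-1) * exp (- x / 2)) \<partial>lborel)"
  proof (intro nn_integral_cong)
    fix x :: real
    show "ennreal (chi_square_density k x) * ennreal x = ennreal (1 / (2 powr (k/2) * Gamma (k/2))) *
        ennreal (indicator {0<..} x * x powr ((k/2+1)-1) * exp (- x / 2))"
    proof (cases "x > 0")
      case True
      have "x powr (k/2-1) * x = x powr ((k/2+1)-1)"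
        using True by (simp add: powr_diff)
      then show ?thesis using True k Gp
        by (simp add: chi_dens_alt ennreal_mult'[symmetric] field_simps)
    next
      case False
      then show ?thesis using k by (simp add: chi_dens_alt)
    qed
  qed
  also have "\<dots> = ennreal (1 / (2 powr (k/2) * Gamma (k/2))) * ennreal (2 powr (k/2+1) * Gamma (k/2+1))"
    using k gamma_half[of "k/2+1"] by (subst nn_integral_cmult) auto
  also have "\<dots> = ennreal k"
  proof -
    have "1 / (2 powr (k/2) * Gamma (k/2)) * (2 powr (k/2+1) * Gamma (k/2+1)) = k"
    proof -
      have "(2::real) powr (k/2+1) = 2 * 2 powr (k/2)" by (simp add: powr_add)
      then show ?thesis using Gp unfolding G by (simp add: field_simps)
    qed
    then show ?thesis using Gp k by (simp add: ennreal_mult'[symmetric])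
  qed
  finally show ?thesis .
qed


lemma gauss_sets[simp, measurable_cong]: "sets (std_gauss :: (real^'n::finite) measure) = sets borel"
  unfolding std_gauss_def by simp

lemma gauss_space[simp]: "space (std_gauss :: (real^'n::finite) measure) = UNIV"
  unfolding std_gauss_def by simp

lemma gauss_prob: "prob_space (std_gauss :: (real^'n::finite) measure)"
proof
  have "emeasure (std_gauss :: (real^'n) measure) (space std_gauss) = (\<integral>\<^sup>+ z. 1 \<partial>(std_gauss :: (real^'n) measure))"
    by (simp add: nn_integral_const)
  also have "\<dots> = (\<integral>\<^sup>+ x. 1 \<partial>chi_square (real CARD('n)))"
    using gauss_chi[of "\<lambda>_. 1", where 'n='n] by simp
  also have "\<dots> = 1" by (rule chi_total) simp
  finally show "emeasure (std_gauss :: (real^'n) measure) (space std_gauss) = 1" .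
qed

lemma gauss_sq: "(\<integral>\<^sup>+ z. ennreal ((norm z)\<^sup>2) \<partial>(std_gauss :: (real^'n::finite) measure)) = ennreal (real CARD('n))"
proof -
  have "(\<integral>\<^sup>+ z. ennreal ((norm z)\<^sup>2) \<partial>(std_gauss :: (real^'n) measure)) = (\<integral>\<^sup>+ x. ennreal x \<partial>chi_square (real CARD('n)))"
    by (rule gauss_chi) simp
  also have "\<dots> = ennreal (real CARD('n))" by (rule chi_mean) simp
  finally show ?thesis .
qed

lemma lborel_vec_uminus: "distr (lborel :: (real^'n::finite) measure) borel uminus = lborel"
  using lborel_affine[of "-1" "0::real^'n"] by (simp add: density_1)

lemma gauss_sym:
  assumes [measurable]: "f \<in> borel_measurable borel"
  shows "(\<integral>\<^sup>+ z. f (- z) \<partial>(std_gauss :: (real^'n::finite) measure)) = (\<integral>\<^sup>+ z. f z \<partial>std_gauss)"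
proof -
  define gd where "gd z = ennreal ((2 * pi) powr (- real CARD('n) / 2) * exp (- (norm (z::real^'n))\<^sup>2 / 2))" for z
  have [measurable]: "gd \<in> borel_measurable borel" unfolding gd_def by measurable
  have "(\<integral>\<^sup>+ z. f (- z) \<partial>(std_gauss :: (real^'n) measure)) = (\<integral>\<^sup>+ z. gd z * f (- z) \<partial>lborel)"
    unfolding std_gauss_def gd_def by (subst nn_integral_density) simp_all
  also have "\<dots> = (\<integral>\<^sup>+ z. (\<lambda>u. gd u * f u) (- z) \<partial>lborel)"
    by (simp add: gd_def)
  also have "\<dots> = (\<integral>\<^sup>+ z. gd z * f z \<partial>distr lborel borel uminus)"
    by (subst nn_integral_distr) simp_all
  also have "\<dots> = (\<integral>\<^sup>+ z. gd z * f z \<partial>lborel)" unfolding lborel_vec_uminus ..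
  also have "\<dots> = (\<integral>\<^sup>+ z. f z \<partial>(std_gauss :: (real^'n) measure))"
    unfolding std_gauss_def gd_def by (subst nn_integral_density) simp_all
  finally show ?thesis .
qed


definition proj :: "real \<Rightarrow> 'a::real_normed_vector \<Rightarrow> 'a" where
  "proj t y = (if norm y \<le> t then y else (t / norm y) *\<^sub>R y)"

lemma block_soft_proj:
  fixes y :: "real^'n::finite" assumes t: "t \<ge> 0"
  shows "block_soft y t = y - proj t y"
proof (cases "norm y \<le> t")
  case True
  show ?thesis
  proof (cases "y = 0")
    case True then show ?thesis by (simp add: block_soft_def proj_def)
  next
    case False
    then have "max 0 (1 - t / norm y) = 0" using \<open>norm y \<le> t\<close> by (auto simp: field_simps)
    then show ?thesis using \<open>norm y \<le> t\<close> by (simp add: block_soft_def proj_def)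
  qed
next
  case False
  then have pos: "norm y > 0" using t by linarith
  then have "max 0 (1 - t / norm y) = 1 - t / norm y" using False by (simp add: field_simps)
  then show ?thesis using False by (simp add: block_soft_def proj_def algebra_simps)
qed

lemma proj_norm: "t \<ge> 0 \<Longrightarrow> norm (proj t y) \<le> t"
  by (auto simp: proj_def)

lemma proj_char:
  fixes a q :: "'a::real_inner" assumes t: "t \<ge> 0" and q: "norm q \<le> t"
  shows "(a - proj t a) \<bullet> (q - proj t a) \<le> 0"
proof (cases "norm a \<le> t")
  case True then show ?thesis by (simp add: proj_def)
next
  case False
  then have pos: "norm a > 0" using t by linarith
  define c where "c = 1 - t / norm a"
  have c: "c \<ge> 0" using False pos by (simp add: c_def field_simps)
  have "a - proj t a = c *\<^sub>R a" using False by (simp add: proj_def c_def algebra_simps)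
  moreover have "a \<bullet> (q - proj t a) = a \<bullet> q - t * norm a"
    using False pos by (simp add: proj_def inner_diff_right power2_norm_eq_inner[symmetric] power2_eq_square)
  moreover have "a \<bullet> q \<le> norm a * t"
    using Cauchy_Schwarz_ineq2[of a q] q pos by (smt (verit) mult_left_mono norm_ge_zero)
  ultimately show ?thesis using c by (simp add: mult_nonneg_nonpos mult.commute)
qed

lemma proj_mono:
  fixes a b :: "'a::real_inner" assumes t: "t \<ge> 0"
  shows "(a - b) \<bullet> (proj t a - proj t b) \<ge> 0"
proof -
  have 1: "(a - proj t a) \<bullet> (proj t b - proj t a) \<le> 0" by (rule proj_char[OF t proj_norm[OF t]])
  have 2: "(b - proj t b) \<bullet> (proj t a - proj t b) \<le> 0" by (rule proj_char[OF t proj_norm[OF t]])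
  have "(a - b) \<bullet> (proj t a - proj t b)
      = (proj t a - proj t b) \<bullet> (proj t a - proj t b) - (a - proj t a) \<bullet> (proj t b - proj t a) - (b - proj t b) \<bullet> (proj t a - proj t b)"
    by (simp add: inner_diff_left inner_diff_right inner_commute algebra_simps)
  then show ?thesis using 1 2 by (smt (verit) inner_ge_zero)
qed

lemma pair_bound:
  fixes z p1 p2 :: "'a::real_inner"
  assumes "z \<bullet> (p1 - p2) \<ge> 0" "norm p1 \<le> t" "norm p2 \<le> t"
  shows "(norm (p1 - z))\<^sup>2 + (norm (p2 + z))\<^sup>2 \<le> 2 * (norm z)\<^sup>2 + 2 * t\<^sup>2"
proof -
  have e: "(norm (p1 - z))\<^sup>2 + (norm (p2 + z))\<^sup>2 = (norm p1)\<^sup>2 + (norm p2)\<^sup>2 + 2 * (norm z)\<^sup>2 - 2 * (z \<bullet> (p1 - p2))"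
    by (simp add: power2_norm_eq_inner inner_diff_left inner_diff_right inner_add_left inner_add_right inner_commute algebra_simps)
  have "(norm p1)\<^sup>2 \<le> t\<^sup>2" "(norm p2)\<^sup>2 \<le> t\<^sup>2" using assms by (auto intro: power_mono)
  then show ?thesis unfolding e using assms(1) by linarith
qed


definition risk :: "real^'n::finite \<Rightarrow> real \<Rightarrow> ennreal" where
  "risk x t = (\<integral>\<^sup>+ z. ennreal ((norm (x - block_soft (x + z) t))\<^sup>2) \<partial>(std_gauss :: (real^'n) measure))"

lemma soft_risk_risk: "soft_risk \<nu> t = (\<integral>\<^sup>+ x. risk x t \<partial>\<nu>)"
  unfolding soft_risk_def risk_def ..

lemma gauss_sq_plus:
  fixes a b :: real assumes "a \<ge> 0" "b \<ge> 0"
  shows "(\<integral>\<^sup>+ z. ennreal (a * (norm z)\<^sup>2 + b) \<partial>(std_gauss :: (real^'n::finite) measure))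
       = ennreal (a * real CARD('n) + b)"
proof -
  interpret prob_space "std_gauss :: (real^'n) measure" by (rule gauss_prob)
  have "(\<integral>\<^sup>+ z. ennreal (a * (norm z)\<^sup>2 + b) \<partial>(std_gauss :: (real^'n) measure))
      = (\<integral>\<^sup>+ z. ennreal a * ennreal ((norm z)\<^sup>2) + ennreal b \<partial>(std_gauss :: (real^'n) measure))"
    using assms by (intro nn_integral_cong) (simp add: ennreal_plus[symmetric] ennreal_mult[symmetric] del: ennreal_plus)
  also have "\<dots> = ennreal a * ennreal (real CARD('n)) + ennreal b"
  proof -
    have sp: "emeasure (std_gauss :: (real^'n) measure) UNIV = 1" using emeasure_space_1 by simp
    show ?thesis by (subst nn_integral_add) (auto simp: nn_integral_cmult gauss_sq sp)
  qed
  also have "\<dots> = ennreal (a * real CARD('n) + b)"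
    using assms by (simp add: ennreal_plus[symmetric] ennreal_mult[symmetric] del: ennreal_plus)
  finally show ?thesis .
qed

lemma risk_upper:
  fixes x :: "real^'n::finite" assumes t: "t \<ge> 0"
  shows "risk x t \<le> ennreal (real CARD('n) + t\<^sup>2)"
proof -
  define f where "f z = ennreal ((norm (x - block_soft (x + z) t))\<^sup>2)" for z :: "real^'n"
  have [measurable]: "f \<in> borel_measurable borel" unfolding f_def block_soft_def by measurable
  have f1: "f z = ennreal ((norm (proj t (x + z) - z))\<^sup>2)" for z
    unfolding f_def block_soft_proj[OF t] by (simp add: algebra_simps)
  have f2: "f (- z) = ennreal ((norm (proj t (x - z) + z))\<^sup>2)" for z
    unfolding f_def block_soft_proj[OF t] by (simp add: algebra_simps)
  have R: "risk x t = (\<integral>\<^sup>+ z. f z \<partial>std_gauss)" unfolding risk_def f_def ..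
  have R2: "risk x t = (\<integral>\<^sup>+ z. f (- z) \<partial>std_gauss)" unfolding R by (rule gauss_sym[symmetric]) simp
  have "risk x t + risk x t = (\<integral>\<^sup>+ z. f z + f (- z) \<partial>(std_gauss :: (real^'n) measure))"
    by (subst nn_integral_add) (simp_all add: R[symmetric] R2[symmetric])
  also have "\<dots> \<le> (\<integral>\<^sup>+ z. ennreal (2 * (norm z)\<^sup>2 + 2 * t\<^sup>2) \<partial>(std_gauss :: (real^'n) measure))"
  proof (intro nn_integral_mono)
    fix z :: "real^'n"
    have m: "(2 *\<^sub>R z) \<bullet> (proj t (x + z) - proj t (x - z)) \<ge> 0"
      using proj_mono[OF t, of "x + z" "x - z"] by (simp add: algebra_simps scaleR_2)
    have "z \<bullet> (proj t (x + z) - proj t (x - z)) \<ge> 0" using m by simp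
    then have "(norm (proj t (x + z) - z))\<^sup>2 + (norm (proj t (x - z) + z))\<^sup>2 \<le> 2 * (norm z)\<^sup>2 + 2 * t\<^sup>2"
      by (intro pair_bound proj_norm t)
    then show "f z + f (- z) \<le> ennreal (2 * (norm z)\<^sup>2 + 2 * t\<^sup>2)"
      unfolding f1 f2 by (simp add: ennreal_plus[symmetric] del: ennreal_plus)
  qed
  also have "\<dots> = ennreal (2 * real CARD('n) + 2 * t\<^sup>2)"
    by (rule gauss_sq_plus) auto
  finally have le: "risk x t + risk x t \<le> ennreal (2 * (real CARD('n) + t\<^sup>2))" by (simp add: algebra_simps)
  obtain r where r: "risk x t = ennreal r" "r \<ge> 0"
    using le by (cases "risk x t" rule: ennreal_cases) (auto simp del: ennreal_plus simp: top_unique)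
  have "ennreal (r + r) \<le> ennreal (2 * (real CARD('n) + t\<^sup>2))"
    using le r by (subst ennreal_plus) auto
  then have "r + r \<le> 2 * (real CARD('n) + t\<^sup>2)"
    by (subst (asm) ennreal_le_iff) (auto intro: add_nonneg_nonneg)
  then show ?thesis using r by (simp del: ennreal_plus add: ennreal_le_iff)
qed


definition F2 :: "real \<Rightarrow> real \<Rightarrow> real" where
  "F2 t x = (if x \<ge> t\<^sup>2 then (sqrt x - t)\<^sup>2 else 0)"
definition F1 :: "real \<Rightarrow> real \<Rightarrow> real" where
  "F1 t x = (if x \<ge> t\<^sup>2 then sqrt x - t else 0)"

lemma F2_meas[measurable]: "F2 t \<in> borel_measurable borel" unfolding F2_def by measurable
lemma F1_meas[measurable]: "F1 t \<in> borel_measurable borel" unfolding F1_def by measurable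

lemma chi_sets[simp, measurable_cong]: "sets (chi_square k) = sets borel"
  unfolding chi_square_def by simp

lemma F1_nonneg: "t \<ge> 0 \<Longrightarrow> F1 t x \<ge> 0"
  unfolding F1_def using real_le_rsqrt[of t x] by auto

lemma chi_m2_F2: "chi_m2 k t = integral\<^sup>L (chi_square k) (F2 t)"
  unfolding chi_m2_def F2_def ..
lemma chi_m1_F1: "chi_m1 k t = integral\<^sup>L (chi_square k) (F1 t)"
  unfolding chi_m1_def F1_def ..

lemma norm_block_soft_sq:
  fixes z :: "real^'n::finite" assumes t: "t \<ge> 0"
  shows "(norm (block_soft z t))\<^sup>2 = F2 t ((norm z)\<^sup>2)"
proof (cases "norm z \<le> t")
  case True
  then have "block_soft z t = 0" by (simp add: block_soft_proj[OF t] proj_def)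
  moreover have "F2 t ((norm z)\<^sup>2) = 0"
  proof (cases "(norm z)\<^sup>2 \<ge> t\<^sup>2")
    case True
    have "t \<le> norm z" using power2_le_imp_le[OF True norm_ge_zero] .
    then have "norm z = t" using \<open>norm z \<le> t\<close> by linarith
    then show ?thesis using t by (simp add: F2_def)
  qed (simp add: F2_def)
  ultimately show ?thesis by simp
next
  case False
  then have pos: "norm z > 0" using t by linarith
  have bs: "block_soft z t = (1 - t / norm z) *\<^sub>R z"
    using False by (simp add: block_soft_proj[OF t] proj_def algebra_simps)
  have "norm (block_soft z t) = norm z - t"
  proof -
    have c: "1 - t / norm z \<ge> 0" using False pos by (simp add: field_simps)
    have "norm ((1 - t / norm z) *\<^sub>R z) = (1 - t / norm z) * norm z" using c by simp
    also have "\<dots> = norm z - t" using pos by (simp add: field_simps)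
    finally show ?thesis using bs by simp
  qed
  moreover have "(norm z)\<^sup>2 \<ge> t\<^sup>2" using False t by (intro power_mono) auto
  ultimately show ?thesis by (simp add: F2_def)
qed

lemma risk0_chi:
  assumes t: "t \<ge> 0"
  shows "risk (0::real^'n::finite) t = (\<integral>\<^sup>+ x. ennreal (F2 t x) \<partial>chi_square (real CARD('n)))"
proof -
  have "risk (0::real^'n) t = (\<integral>\<^sup>+ z. (\<lambda>x. ennreal (F2 t x)) ((norm z)\<^sup>2) \<partial>(std_gauss :: (real^'n) measure))"
    unfolding risk_def by (intro nn_integral_cong) (simp add: norm_block_soft_sq[OF t])
  also have "\<dots> = (\<integral>\<^sup>+ x. ennreal (F2 t x) \<partial>chi_square (real CARD('n)))"
    by (rule gauss_chi) simp
  finally show ?thesis .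
qed

lemma chi_m2_risk0:
  assumes t: "t \<ge> 0"
  shows "ennreal (chi_m2 (real CARD('n::finite)) t) = risk (0::real^'n) t"
proof -
  have fin: "risk (0::real^'n) t < \<infinity>"
    using risk_upper[OF t, of "0::real^'n"] by (simp add: le_less_trans)
  have "chi_m2 (real CARD('n)) t = enn2real (\<integral>\<^sup>+ x. ennreal (F2 t x) \<partial>chi_square (real CARD('n)))"
    unfolding chi_m2_F2 by (rule integral_eq_nn_integral) (measurable, simp add: F2_def)
  also have "\<dots> = enn2real (risk (0::real^'n) t)" by (simp add: risk0_chi[OF t])
  finally show ?thesis using fin by simp
qed


lemma risk_meas[measurable]: "(\<lambda>x. risk x t) \<in> borel_measurable (borel :: (real^'n::finite) measure)"
proof -
  interpret prob_space "std_gauss :: (real^'n) measure" by (rule gauss_prob)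
  have "(\<lambda>(x, z). ennreal ((norm (x - block_soft (x + z) t))\<^sup>2)) \<in> borel_measurable (borel \<Otimes>\<^sub>M (std_gauss :: (real^'n) measure))"
    unfolding block_soft_def by measurable
  then show ?thesis unfolding risk_def by (rule borel_measurable_nn_integral)
qed

definition mixp :: "real \<Rightarrow> real^'n::finite \<Rightarrow> (real^'n) measure" where
  "mixp e x = distr (measure_pmf (bernoulli_pmf e)) borel (\<lambda>b. if b then x else 0)"

lemma mixp_sparse:
  assumes e: "0 \<le> e" "e \<le> 1"
  shows "mixp e x \<in> sparse_priors e"
proof -
  have P: "prob_space (mixp e x)" unfolding mixp_def
    by (rule prob_space.prob_space_distr) (auto simp: prob_space_measure_pmf)
  have "measure (mixp e x) {0} = measure_pmf.prob (bernoulli_pmf e) {b. (if b then x else 0) = 0}"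
    unfolding mixp_def by (subst measure_distr) (auto simp: vimage_def)
  also have "\<dots> \<ge> measure_pmf.prob (bernoulli_pmf e) {False}"
    by (intro measure_pmf.finite_measure_mono) auto
  finally have "measure (mixp e x) {0} \<ge> 1 - e"
    using e by (simp add: measure_pmf_single)
  then show ?thesis using P unfolding sparse_priors_def by (simp add: mixp_def)
qed

lemma mixp_risk:
  fixes x :: "real^'n::finite"
  assumes e: "0 \<le> e" "e \<le> 1"
  shows "soft_risk (mixp e x) t = ennreal (1 - e) * risk (0::real^'n) t + ennreal e * risk x t"
proof -
  have "soft_risk (mixp e x) t = (\<integral>\<^sup>+ b. risk (if b then x else 0) t \<partial>measure_pmf (bernoulli_pmf e))"
    unfolding soft_risk_risk mixp_def by (subst nn_integral_distr) auto
  also have "\<dots> = (\<Sum>b\<in>UNIV. risk (if b then x else 0) t * ennreal (pmf (bernoulli_pmf e) b))"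
    by (rule nn_integral_measure_pmf_support) auto
  also have "\<dots> = ennreal (1 - e) * risk (0::real^'n) t + ennreal e * risk x t"
    using e by (simp add: UNIV_bool ac_simps)
  finally show ?thesis .
qed


lemma proj_limit:
  fixes e z :: "'a::real_normed_vector" assumes e: "norm e = 1" and t: "t \<ge> 0"
  shows "(\<lambda>n. proj t (real n *\<^sub>R e + z)) \<longlonglongrightarrow> t *\<^sub>R e"
proof -
  define w where "w n = e + (1 / real n) *\<^sub>R z" for n :: nat
  have w: "w \<longlonglongrightarrow> e"
  proof -
    have "(\<lambda>n. e + (1 / real n) *\<^sub>R z) \<longlonglongrightarrow> e + 0 *\<^sub>R z"
      by (intro tendsto_intros)
    then show ?thesis unfolding w_def by simp
  qed
  have nw: "(\<lambda>n. norm (w n)) \<longlonglongrightarrow> 1" using tendsto_norm[OF w] e by simp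
  have lim: "(\<lambda>n. t *\<^sub>R ((1 / norm (w n)) *\<^sub>R w n)) \<longlonglongrightarrow> t *\<^sub>R ((1 / 1) *\<^sub>R e)"
    by (intro tendsto_intros w nw) simp
  have ev: "eventually (\<lambda>n. t *\<^sub>R ((1 / norm (w n)) *\<^sub>R w n) = proj t (real n *\<^sub>R e + z)) sequentially"
  proof -
    obtain N :: nat where N: "real N > norm z + t" using reals_Archimedean2 by blast
    show ?thesis unfolding eventually_sequentially
    proof (intro exI allI impI)
      fix n assume "N \<le> n"
      then have "real N \<le> real n" by simp
      then have n: "real n > norm z + t" using N by linarith
      then have npos: "real n > 0" using t norm_ge_zero[of z] by linarith
      have y: "real n *\<^sub>R e + z = real n *\<^sub>R w n" using npos by (simp add: w_def scaleR_add_right)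
      have "norm (real n *\<^sub>R e) - norm z \<le> norm (real n *\<^sub>R e + z)" by (rule norm_diff_ineq)
      then have big: "norm (real n *\<^sub>R e + z) > t" using n e npos by simp
      have nwpos: "norm (w n) > 0" using big y npos t by (auto simp: w_def)
      have "proj t (real n *\<^sub>R e + z) = (t / norm (real n *\<^sub>R w n)) *\<^sub>R (real n *\<^sub>R w n)"
        using big unfolding y proj_def by simp
      also have "\<dots> = t *\<^sub>R ((1 / norm (w n)) *\<^sub>R w n)"
        using npos nwpos by (simp add: field_simps)
      finally show "t *\<^sub>R ((1 / norm (w n)) *\<^sub>R w n) = proj t (real n *\<^sub>R e + z)" ..
    qed
  qed
  show ?thesis using Lim_transform_eventually[OF lim ev] by simp
qed

lemma gauss_shift_sq:
  fixes a :: "real^'n::finite"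
  shows "(\<integral>\<^sup>+ z. ennreal ((norm (a - z))\<^sup>2) \<partial>(std_gauss :: (real^'n) measure)) = ennreal (real CARD('n) + (norm a)\<^sup>2)"
proof -
  define I where "I = (\<integral>\<^sup>+ z. ennreal ((norm (a - z))\<^sup>2) \<partial>(std_gauss :: (real^'n) measure))"
  have I2: "I = (\<integral>\<^sup>+ z. ennreal ((norm (a + z))\<^sup>2) \<partial>(std_gauss :: (real^'n) measure))"
    unfolding I_def using gauss_sym[of "\<lambda>z::real^'n. ennreal ((norm (a - z))\<^sup>2)"] by simp
  have "I + I = (\<integral>\<^sup>+ z. ennreal ((norm (a - z))\<^sup>2) + ennreal ((norm (a + z))\<^sup>2) \<partial>(std_gauss :: (real^'n) measure))"
    by (subst nn_integral_add) (simp_all add: I_def[symmetric] I2[symmetric])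
  also have "\<dots> = (\<integral>\<^sup>+ z. ennreal (2 * (norm z)\<^sup>2 + 2 * (norm a)\<^sup>2) \<partial>(std_gauss :: (real^'n) measure))"
  proof (intro nn_integral_cong)
    fix z :: "real^'n"
    have "(norm (a - z))\<^sup>2 + (norm (a + z))\<^sup>2 = 2 * (norm z)\<^sup>2 + 2 * (norm a)\<^sup>2"
      by (simp add: power2_norm_eq_inner inner_diff_left inner_diff_right inner_add_left inner_add_right inner_commute algebra_simps)
    then show "ennreal ((norm (a - z))\<^sup>2) + ennreal ((norm (a + z))\<^sup>2) = ennreal (2 * (norm z)\<^sup>2 + 2 * (norm a)\<^sup>2)"
      by (simp add: ennreal_plus[symmetric] del: ennreal_plus)
  qed
  also have "\<dots> = ennreal (2 * real CARD('n) + 2 * (norm a)\<^sup>2)"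
    by (rule gauss_sq_plus) auto
  finally have le: "I + I = ennreal (2 * (real CARD('n) + (norm a)\<^sup>2))" by (simp add: algebra_simps)
  obtain r where r: "I = ennreal r" "r \<ge> 0"
    using le by (cases I rule: ennreal_cases) (auto simp del: ennreal_plus)
  have "ennreal (r + r) = ennreal (2 * (real CARD('n) + (norm a)\<^sup>2))"
    using le r by (subst ennreal_plus) auto
  then have "r + r = 2 * (real CARD('n) + (norm a)\<^sup>2)"
    using r by (subst (asm) ennreal_inj) (auto intro: add_nonneg_nonneg)
  then have "r = real CARD('n) + (norm a)\<^sup>2" by simp
  then show ?thesis using r unfolding I_def by simp
qed


lemma lower_bound:
  fixes t c d :: real and S :: ennreal
  assumes t: "t \<ge> 0" and c: "c \<ge> 0" and d: "d \<ge> 0"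
    and S: "\<And>x::real^'n::finite. ennreal c * risk (0::real^'n) t + ennreal d * risk x t \<le> S"
  shows "ennreal c * risk (0::real^'n) t + ennreal d * ennreal (real CARD('n) + t\<^sup>2) \<le> S"
proof -
  define e :: "real^'n" where "e = axis undefined 1"
  have e: "norm e = 1" unfolding e_def by simp
  define x where "x n = real n *\<^sub>R e" for n :: nat
  define a where "a z = (norm (block_soft z t))\<^sup>2" for z :: "real^'n"
  define b where "b n z = (norm (x n - block_soft (x n + z) t))\<^sup>2" for n and z :: "real^'n"
  have [measurable]: "a \<in> borel_measurable borel" unfolding a_def block_soft_def by measurable
  have [measurable]: "b n \<in> borel_measurable borel" for n unfolding b_def block_soft_def by measurable
  have r0: "risk (0::real^'n) t = (\<integral>\<^sup>+ z. ennreal (a z) \<partial>std_gauss)"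
    unfolding risk_def a_def by simp
  have rn: "risk (x n) t = (\<integral>\<^sup>+ z. ennreal (b n z) \<partial>std_gauss)" for n
    unfolding risk_def b_def ..
  have eqn: "ennreal c * risk (0::real^'n) t + ennreal d * risk (x n) t
      = (\<integral>\<^sup>+ z. ennreal (c * a z + d * b n z) \<partial>(std_gauss :: (real^'n) measure))" for n
  proof -
    have "(\<integral>\<^sup>+ z. ennreal (c * a z + d * b n z) \<partial>(std_gauss :: (real^'n) measure))
        = (\<integral>\<^sup>+ z. ennreal c * ennreal (a z) + ennreal d * ennreal (b n z) \<partial>(std_gauss :: (real^'n) measure))"
      using c d by (intro nn_integral_cong)
        (simp add: a_def b_def ennreal_plus[symmetric] ennreal_mult[symmetric] del: ennreal_plus)
    also have "\<dots> = ennreal c * risk (0::real^'n) t + ennreal d * risk (x n) t"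
      unfolding r0 rn by (subst nn_integral_add) (auto simp: nn_integral_cmult)
    finally show ?thesis ..
  qed
  have lim: "(\<lambda>n. c * a z + d * b n z) \<longlonglongrightarrow> c * a z + d * (norm (t *\<^sub>R e - z))\<^sup>2" for z
  proof -
    have bn: "b n z = (norm (proj t (real n *\<^sub>R e + z) - z))\<^sup>2" for n
      unfolding b_def x_def block_soft_proj[OF t] by (simp add: algebra_simps)
    have "(\<lambda>n. c * a z + d * (norm (proj t (real n *\<^sub>R e + z) - z))\<^sup>2) \<longlonglongrightarrow> c * a z + d * (norm (t *\<^sub>R e - z))\<^sup>2"
      by (intro tendsto_intros proj_limit e t)
    then show ?thesis unfolding bn .
  qed
  have "ennreal c * risk (0::real^'n) t + ennreal d * ennreal (real CARD('n) + t\<^sup>2)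
      = (\<integral>\<^sup>+ z. ennreal (c * a z + d * (norm (t *\<^sub>R e - z))\<^sup>2) \<partial>(std_gauss :: (real^'n) measure))"
  proof -
    have "(\<integral>\<^sup>+ z. ennreal (c * a z + d * (norm (t *\<^sub>R e - z))\<^sup>2) \<partial>(std_gauss :: (real^'n) measure))
        = (\<integral>\<^sup>+ z. ennreal c * ennreal (a z) + ennreal d * ennreal ((norm (t *\<^sub>R e - z))\<^sup>2) \<partial>(std_gauss :: (real^'n) measure))"
      using c d by (intro nn_integral_cong)
        (simp add: a_def ennreal_plus[symmetric] ennreal_mult[symmetric] del: ennreal_plus)
    also have "\<dots> = ennreal c * risk (0::real^'n) t + ennreal d * ennreal (real CARD('n) + (norm (t *\<^sub>R e))\<^sup>2)"
      unfolding r0 gauss_shift_sq[symmetric] by (subst nn_integral_add) (auto simp: nn_integral_cmult)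
    finally show ?thesis using e t by simp
  qed
  also have "\<dots> = (\<integral>\<^sup>+ z. liminf (\<lambda>n. ennreal (c * a z + d * b n z)) \<partial>(std_gauss :: (real^'n) measure))"
    by (intro nn_integral_cong lim_imp_Liminf[symmetric] trivial_limit_sequentially tendsto_ennrealI lim)
  also have "\<dots> \<le> liminf (\<lambda>n. (\<integral>\<^sup>+ z. ennreal (c * a z + d * b n z) \<partial>(std_gauss :: (real^'n) measure)))"
    by (intro nn_integral_liminf) simp
  also have "\<dots> \<le> limsup (\<lambda>n. (\<integral>\<^sup>+ z. ennreal (c * a z + d * b n z) \<partial>(std_gauss :: (real^'n) measure)))"
    by (intro Liminf_le_Limsup) simp
  also have "\<dots> \<le> S"
    by (intro Limsup_bounded always_eventually allI) (simp add: eqn[symmetric] S)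
  finally show ?thesis .
qed


lemma F2_integrable:
  assumes t: "t \<ge> 0"
  shows "integrable (chi_square (real CARD('n::finite))) (F2 t)"
proof (rule integrableI_nonneg)
  show "F2 t \<in> borel_measurable (chi_square (real CARD('n)))" by measurable
  show "AE x in chi_square (real CARD('n)). 0 \<le> F2 t x" by (simp add: F2_def)
  have "(\<integral>\<^sup>+ x. ennreal (F2 t x) \<partial>chi_square (real CARD('n))) = risk (0::real^'n) t"
    by (simp add: risk0_chi[OF t])
  also have "\<dots> < \<infinity>" using risk_upper[OF t, of "0::real^'n"] by (simp add: le_less_trans)
  finally show "(\<integral>\<^sup>+ x. ennreal (F2 t x) \<partial>chi_square (real CARD('n))) < \<infinity>" .
qed

lemma F1_nn_bound:
  assumes t: "t \<ge> 0"
  shows "(\<integral>\<^sup>+ x. ennreal (F1 t x) \<partial>chi_square (real CARD('n::finite))) \<le> ennreal (real CARD('n) + 1)"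
proof -
  have "(\<integral>\<^sup>+ x. ennreal (F1 t x) \<partial>chi_square (real CARD('n)))
      = (\<integral>\<^sup>+ z. (\<lambda>x. ennreal (F1 t x)) ((norm z)\<^sup>2) \<partial>(std_gauss :: (real^'n) measure))"
    by (rule gauss_chi[symmetric]) simp
  also have "\<dots> \<le> (\<integral>\<^sup>+ z. ennreal (1 * (norm z)\<^sup>2 + 1) \<partial>(std_gauss :: (real^'n) measure))"
  proof (intro nn_integral_mono)
    fix z :: "real^'n"
    have "F1 t ((norm z)\<^sup>2) \<le> norm z"
      unfolding F1_def using t by auto
    also have "norm z \<le> 1 * (norm z)\<^sup>2 + 1"
    proof (cases "norm z \<le> 1")
      case True then show ?thesis using zero_le_power2[of "norm z"] by linarith
    next
      case False
      then have "norm z * 1 \<le> norm z * norm z" by (intro mult_left_mono) auto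
      then show ?thesis by (simp add: power2_eq_square)
    qed
    finally show "ennreal (F1 t ((norm z)\<^sup>2)) \<le> ennreal (1 * (norm z)\<^sup>2 + 1)"
      by (rule ennreal_leI)
  qed
  also have "\<dots> = ennreal (1 * real CARD('n) + 1)" by (rule gauss_sq_plus) auto
  finally show ?thesis by simp
qed

lemma F1_integrable:
  assumes t: "t \<ge> 0"
  shows "integrable (chi_square (real CARD('n::finite))) (F1 t)"
proof (rule integrableI_nonneg)
  show "F1 t \<in> borel_measurable (chi_square (real CARD('n)))" by measurable
  show "AE x in chi_square (real CARD('n)). 0 \<le> F1 t x" by (simp add: F1_nonneg[OF t])
  show "(\<integral>\<^sup>+ x. ennreal (F1 t x) \<partial>chi_square (real CARD('n))) < \<infinity>"
    using F1_nn_bound[OF t, where 'n='n] by (simp add: le_less_trans)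
qed

lemma chi_m1_pos:
  assumes t: "t > 0"
  shows "chi_m1 (real CARD('n::finite)) t > 0"
proof -
  define k where "k = real CARD('n)"
  have k: "k > 0" unfolding k_def by simp
  define I where "I = (\<integral>\<^sup>+ x. ennreal (F1 t x) \<partial>chi_square k)"
  have fin: "I < \<infinity>" unfolding I_def k_def using F1_nn_bound[of t, where 'n='n] t by (simp add: le_less_trans)
  have eq: "chi_m1 k t = enn2real I"
    unfolding chi_m1_F1 I_def by (rule integral_eq_nn_integral) (measurable, simp add: F1_nonneg t less_imp_le)
  have I2: "I = (\<integral>\<^sup>+ x. ennreal (chi_square_density k x) * ennreal (F1 t x) \<partial>lborel)"
    unfolding I_def by (rule nn_integral_chi) (simp_all add: k)
  have "I \<noteq> 0"
  proof
    assume "I = 0"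
    then have "AE x in lborel. ennreal (chi_square_density k x) * ennreal (F1 t x) = 0"
      unfolding I2 by (subst (asm) nn_integral_0_iff_AE) auto
    then obtain N where N: "{x \<in> space lborel. \<not> (ennreal (chi_square_density k x) * ennreal (F1 t x) = 0)} \<subseteq> N"
      "emeasure lborel N = 0" "N \<in> sets lborel"
      by (rule AE_E)
    have sub: "{t\<^sup>2 <..< t\<^sup>2 + 1} \<subseteq> N"
    proof
      fix x assume x: "x \<in> {t\<^sup>2 <..< t\<^sup>2 + 1}"
      then have xpos: "x > 0" using t by (smt (verit) zero_le_power2 greaterThanLessThan_iff)
      have "t < sqrt x" using x by (intro real_less_rsqrt) simp
      then have F: "F1 t x > 0" using x by (simp add: F1_def)
      have C: "chi_square_density k x > 0"
        using xpos k by (simp add: chi_square_density_def)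
      show "x \<in> N" using N(1) F C by auto
    qed
    have "emeasure lborel {t\<^sup>2 <..< t\<^sup>2 + 1} \<le> emeasure lborel N"
      by (rule emeasure_mono[OF sub N(3)])
    then show False using N(2) by simp
  qed
  then have "enn2real I > 0" using fin by (simp add: enn2real_positive_iff less_top[symmetric] zero_less_iff_neq_zero)
  then show ?thesis using eq unfolding k_def by simp
qed

lemma pointwise_conv:
  fixes s t u :: real assumes t: "t \<ge> 0" and u: "u \<ge> 0"
  shows "(max 0 (s - t))\<^sup>2 \<ge> (max 0 (s - u))\<^sup>2 - 2 * (t - u) * max 0 (s - u)"
proof (cases "s \<le> u")
  case True then show ?thesis by simp
next
  case False
  then have e: "(max 0 (s - u))\<^sup>2 - 2 * (t - u) * max 0 (s - u) = (s - t)\<^sup>2 - (t - u)\<^sup>2"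
    by (simp add: power2_eq_square algebra_simps)
  show ?thesis
  proof (cases "s \<ge> t")
    case True then show ?thesis unfolding e by simp
  next
    case False
    then have "\<bar>s - t\<bar> \<le> \<bar>t - u\<bar>" using \<open>\<not> s \<le> u\<close> by arith
    then have "(s - t)\<^sup>2 \<le> (t - u)\<^sup>2" by (simp only: abs_le_square_iff)
    moreover have "max 0 (s - t) = 0" using False by simp
    ultimately show ?thesis unfolding e by simp
  qed
qed


lemma sqrt_ge_iff: "t \<ge> 0 \<Longrightarrow> x \<ge> 0 \<Longrightarrow> (x \<ge> t\<^sup>2) = (sqrt x \<ge> t)"
proof
  assume "t \<ge> 0" "x \<ge> 0" "x \<ge> t\<^sup>2" then show "sqrt x \<ge> t" by (intro real_le_rsqrt)
next
  assume t: "t \<ge> 0" and x: "x \<ge> 0" and s: "sqrt x \<ge> t"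
  have "t\<^sup>2 \<le> (sqrt x)\<^sup>2" using s t by (intro power_mono) auto
  then show "x \<ge> t\<^sup>2" using x by simp
qed

lemma F2_max: "t \<ge> 0 \<Longrightarrow> x \<ge> 0 \<Longrightarrow> F2 t x = (max 0 (sqrt x - t))\<^sup>2"
  unfolding F2_def by (auto simp: sqrt_ge_iff max_def)

lemma F1_max: "t \<ge> 0 \<Longrightarrow> x \<ge> 0 \<Longrightarrow> F1 t x = max 0 (sqrt x - t)"
  unfolding F1_def by (auto simp: sqrt_ge_iff max_def)

lemma F_conv:
  assumes t: "t \<ge> 0" and u: "u \<ge> 0"
  shows "F2 u x - 2 * (t - u) * F1 u x \<le> F2 t x"
proof (cases "x \<ge> 0")
  case True
  show ?thesis unfolding F2_max[OF t True] F2_max[OF u True] F1_max[OF u True]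
    using pointwise_conv[OF t u, of "sqrt x"] by simp
next
  case False
  then have "\<not> x \<ge> t\<^sup>2" "\<not> x \<ge> u\<^sup>2" by (smt (verit) zero_le_power2)+
  then show ?thesis by (simp add: F1_def F2_def)
qed

lemma chi_conv:
  assumes t: "t \<ge> 0" and u: "u \<ge> 0"
  shows "chi_m2 (real CARD('n::finite)) u - 2 * (t - u) * chi_m1 (real CARD('n)) u \<le> chi_m2 (real CARD('n)) t"
proof -
  let ?M = "chi_square (real CARD('n))"
  have i2u: "integrable ?M (F2 u)" by (rule F2_integrable[OF u])
  have i2t: "integrable ?M (F2 t)" by (rule F2_integrable[OF t])
  have i1u: "integrable ?M (F1 u)" by (rule F1_integrable[OF u])
  have "chi_m2 (real CARD('n)) u - 2 * (t - u) * chi_m1 (real CARD('n)) u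
      = integral\<^sup>L ?M (\<lambda>x. F2 u x - 2 * (t - u) * F1 u x)"
    unfolding chi_m2_F2 chi_m1_F1 using i2u i1u by simp
  also have "\<dots> \<le> integral\<^sup>L ?M (F2 t)"
    using i2u i1u i2t by (intro integral_mono F_conv t u) auto
  finally show ?thesis unfolding chi_m2_F2 .
qed


lemma upper_prior:
  fixes \<nu> :: "(real^'n::finite) measure" and t e :: real
  assumes t: "t \<ge> 0" and nu: "\<nu> \<in> sparse_priors e"
  shows "soft_risk \<nu> t \<le> ennreal ((1 - e) * chi_m2 (real CARD('n)) t + e * (real CARD('n) + t\<^sup>2))"
proof -
  define m2 where "m2 = chi_m2 (real CARD('n)) t"
  define C where "C = real CARD('n) + t\<^sup>2"
  have P: "prob_space \<nu>" and S: "sets \<nu> = sets borel" and p: "measure \<nu> {0} \<ge> 1 - e"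
    using nu unfolding sparse_priors_def by auto
  interpret prob_space \<nu> by (rule P)
  have sp: "space \<nu> = UNIV" using sets_eq_imp_space_eq[OF S] by simp
  have [measurable_cong]: "sets \<nu> = sets borel" by (rule S)
  have r0: "risk (0::real^'n) t = ennreal m2" unfolding m2_def by (rule chi_m2_risk0[OF t, symmetric])
  have m2nn: "m2 \<ge> 0" unfolding m2_def chi_m2_F2 by (rule integral_nonneg_AE) (simp add: F2_def)
  have "ennreal m2 \<le> ennreal C"
    using risk_upper[OF t, of "0::real^'n"] unfolding r0 C_def .
  then have m2C: "m2 \<le> C" unfolding C_def by (subst (asm) ennreal_le_iff) auto
  have "soft_risk \<nu> t \<le> (\<integral>\<^sup>+ x. ennreal m2 * indicator {0} x + ennreal C * indicator (- {0}) x \<partial>\<nu>)"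
    unfolding soft_risk_risk
  proof (intro nn_integral_mono)
    fix x :: "real^'n"
    show "risk x t \<le> ennreal m2 * indicator {0} x + ennreal C * indicator (- {0}) x"
      using risk_upper[OF t, of x] r0 unfolding C_def by (cases "x = 0") auto
  qed
  also have "\<dots> = ennreal m2 * emeasure \<nu> {0} + ennreal C * emeasure \<nu> (- {0})"
    by (subst nn_integral_add) (auto simp: nn_integral_cmult_indicator)
  also have "\<dots> = ennreal (m2 * measure \<nu> {0} + C * (1 - measure \<nu> {0}))"
  proof -
    have "emeasure \<nu> (- {0}) = ennreal (1 - measure \<nu> {0})"
      using prob_compl[of "{0}"] sp emeasure_eq_measure[of "- {0}"]
      by (simp add: Compl_eq_Diff_UNIV)
    then show ?thesis using m2nn m2C emeasure_eq_measure[of "{0}"] C_def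
      by (simp add: ennreal_mult'[symmetric] ennreal_plus[symmetric] del: ennreal_plus)
  qed
  also have "\<dots> \<le> ennreal ((1 - e) * m2 + e * C)"
  proof (intro ennreal_leI)
    have "(C - m2) * (1 - e - measure \<nu> {0}) \<le> 0"
      using m2C p by (intro mult_nonneg_nonpos) auto
    then show "m2 * measure \<nu> {0} + C * (1 - measure \<nu> {0}) \<le> (1 - e) * m2 + e * C"
      by (simp add: algebra_simps)
  qed
  finally show ?thesis unfolding m2_def C_def .
qed

lemma lower_prior:
  fixes t e :: real
  assumes t: "t \<ge> 0" and e: "0 \<le> e" "e \<le> 1"
  shows "ennreal ((1 - e) * chi_m2 (real CARD('n::finite)) t + e * (real CARD('n) + t\<^sup>2))
      \<le> (SUP \<nu>\<in>(sparse_priors e :: (real ^ 'n) measure set). soft_risk \<nu> t)"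
proof -
  have m2nn: "chi_m2 (real CARD('n)) t \<ge> 0" unfolding chi_m2_F2 by (rule integral_nonneg_AE) (simp add: F2_def)
  have "ennreal (1 - e) * risk (0::real^'n) t + ennreal e * ennreal (real CARD('n) + t\<^sup>2)
      \<le> (SUP \<nu>\<in>(sparse_priors e :: (real ^ 'n) measure set). soft_risk \<nu> t)"
  proof (rule lower_bound[OF t])
    fix x :: "real^'n"
    show "ennreal (1 - e) * risk (0::real^'n) t + ennreal e * risk x t \<le> (SUP \<nu>\<in>(sparse_priors e :: (real ^ 'n) measure set). soft_risk \<nu> t)"
      using mixp_risk[OF e, of x t] by (intro SUP_upper2[OF mixp_sparse[OF e, of x]]) simp
  qed (use e in auto)
  moreover have "ennreal (1 - e) * risk (0::real^'n) t + ennreal e * ennreal (real CARD('n) + t\<^sup>2)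
      = ennreal ((1 - e) * chi_m2 (real CARD('n::finite)) t + e * (real CARD('n) + t\<^sup>2))"
    using e m2nn unfolding chi_m2_risk0[OF t, symmetric]
    by (simp add: ennreal_mult'[symmetric] ennreal_plus[symmetric] del: ennreal_plus)
  ultimately show ?thesis by simp
qed

theorem mainTheorem3:
  fixes \<tau> :: real and \<epsilon> :: real
  defines "B \<equiv> real CARD('n::finite)"
  assumes "\<tau> > 0"
    and "\<epsilon> = 1 / (1 + h_fun B \<tau>)"
  shows "minimax_blocksoft TYPE('n) \<epsilon>
           = ennreal ((B + \<tau>\<^sup>2 + g_fun B \<tau>) / (B * (1 + h_fun B \<tau>)))
         \<and> (SUP \<nu>\<in>(sparse_priors \<epsilon> :: (real ^ 'n) measure set). soft_risk \<nu> \<tau>)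
           = (INF t\<in>{0..}. SUP \<nu>\<in>(sparse_priors \<epsilon> :: (real ^ 'n) measure set). soft_risk \<nu> t)"
proof -
  note tau = \<open>\<tau> > 0\<close>
  have Bpos: "B > 0" unfolding B_def by simp
  define m1 where "m1 = chi_m1 B \<tau>"
  have m1: "m1 > 0" unfolding m1_def B_def by (rule chi_m1_pos[OF tau])
  define h where "h = \<tau> / m1"
  have h: "h > 0" unfolding h_def using tau m1 by simp
  have hf: "h_fun B \<tau> = h" unfolding h_fun_def h_def m1_def ..
  have eps: "\<epsilon> = 1 / (1 + h)" using assms(3) hf by simp
  have e0: "0 \<le> \<epsilon>" "\<epsilon> \<le> 1" unfolding eps using h by simp_all
  have key: "(1 - \<epsilon>) * m1 = \<epsilon> * \<tau>"
    using h m1 unfolding eps h_def by (simp add: field_simps)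
  define \<Phi> where "\<Phi> t = (1 - \<epsilon>) * chi_m2 B t + \<epsilon> * (B + t\<^sup>2)" for t
  define S where "S t = (SUP \<nu>\<in>(sparse_priors \<epsilon> :: (real ^ 'n) measure set). soft_risk \<nu> t)" for t
  have low: "ennreal (\<Phi> t) \<le> S t" if "t \<ge> 0" for t
    unfolding \<Phi>_def S_def B_def by (rule lower_prior[OF that e0])
  have up: "S \<tau> \<le> ennreal (\<Phi> \<tau>)"
    unfolding S_def \<Phi>_def B_def
    by (intro SUP_least upper_prior) (use tau in auto)
  have S_tau: "S \<tau> = ennreal (\<Phi> \<tau>)" using low[of \<tau>] up tau by (auto intro: order.antisym)
  have conv: "\<Phi> \<tau> \<le> \<Phi> t" if t: "t \<ge> 0" for t
  proof -
    have c: "chi_m2 B \<tau> - 2 * (t - \<tau>) * m1 \<le> chi_m2 B t"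
      unfolding m1_def B_def by (rule chi_conv[OF t]) (use tau in simp)
    have "(1 - \<epsilon>) * (chi_m2 B \<tau> - 2 * (t - \<tau>) * m1) \<le> (1 - \<epsilon>) * chi_m2 B t"
      using c e0 by (intro mult_left_mono) auto
    then have "(1 - \<epsilon>) * chi_m2 B \<tau> - 2 * (t - \<tau>) * (\<epsilon> * \<tau>) \<le> (1 - \<epsilon>) * chi_m2 B t"
      unfolding key[symmetric] by (simp add: algebra_simps)
    moreover have "\<epsilon> * (t - \<tau>)\<^sup>2 \<ge> 0" using e0 by simp
    ultimately show ?thesis unfolding \<Phi>_def by (simp add: power2_eq_square algebra_simps)
  qed
  have INF: "(INF t\<in>{0..}. S t) = ennreal (\<Phi> \<tau>)"
  proof (rule order.antisym)
    show "(INF t\<in>{0..}. S t) \<le> ennreal (\<Phi> \<tau>)"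
      using tau by (intro INF_lower2[of \<tau>]) (auto simp: S_tau)
    show "ennreal (\<Phi> \<tau>) \<le> (INF t\<in>{0..}. S t)"
    proof (rule INF_greatest)
      fix t :: real assume "t \<in> {0..}"
      then have t: "t \<ge> 0" by simp
      have "ennreal (\<Phi> \<tau>) \<le> ennreal (\<Phi> t)" by (rule ennreal_leI[OF conv[OF t]])
      also have "\<dots> \<le> S t" by (rule low[OF t])
      finally show "ennreal (\<Phi> \<tau>) \<le> S t" .
    qed
  qed
  have m2nn: "chi_m2 B \<tau> \<ge> 0" unfolding chi_m2_F2 by (rule integral_nonneg_AE) (simp add: F2_def)
  have Phinn: "\<Phi> \<tau> \<ge> 0" unfolding \<Phi>_def using e0 m2nn Bpos by simp
  have val: "\<Phi> \<tau> / B = (B + \<tau>\<^sup>2 + g_fun B \<tau>) / (B * (1 + h_fun B \<tau>))"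
  proof -
    have g: "g_fun B \<tau> = h * chi_m2 B \<tau>" unfolding g_fun_def h_def m1_def by simp
    have d: "1 + h \<noteq> 0" using h by simp
    have q1: "\<epsilon> * (1 + h) = 1" using d unfolding eps by simp
    have e1: "1 - \<epsilon> = \<epsilon> * h" using q1 by (simp add: algebra_simps)
    have P: "\<Phi> \<tau> = \<epsilon> * (B + \<tau>\<^sup>2 + h * chi_m2 B \<tau>)"
      unfolding \<Phi>_def e1 by (simp add: algebra_simps)
    show ?thesis unfolding hf g P eps using d Bpos by (simp add: field_simps)
  qed
  have "minimax_blocksoft TYPE('n) \<epsilon> = (INF t\<in>{0..}. S t) / ennreal B"
    unfolding minimax_blocksoft_def S_def B_def ..
  also have "\<dots> = ennreal (\<Phi> \<tau> / B)" unfolding INF using Phinn Bpos by (simp add: divide_ennreal)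
  finally have A: "minimax_blocksoft TYPE('n) \<epsilon> = ennreal ((B + \<tau>\<^sup>2 + g_fun B \<tau>) / (B * (1 + h_fun B \<tau>)))"
    unfolding val .
  have Bq: "S \<tau> = (INF t\<in>{0..}. S t)" unfolding INF S_tau ..
  show ?thesis using A Bq unfolding S_def by simp
qed


end
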